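(* For all integers $k\ge 1$ and $t\ge 1$, $$B_0(k,2t-1)+B_1(k+1,2t)=B_0(k,2t-2k-1)+p_{de}(2t-k-1).$$
   Context: For a partition $\pi$, $s(\pi)$ is its smallest part. For $j\ge1$, $\mathrm{Spt}j_{do}(n)$ is the set of partitions $\pi$ of $n$ in which $s(\pi)$ occurs exactly $j$ times and the remaining parts (those larger than $s(\pi)$) are pairwise distinct and each has parity different from that of $s(\pi)$. $B_0(j,n)$ (resp. $B_1(j,n)$) is the number of $\pi\in\mathrm{Spt}j_{do}(n)$ whose number of parts greater than $s(\pi)$ is even (resp. odd); $B_0(j,n)=B_1(j,n)=0$ for $n\le 0$. $p_{de}(n)$ is the number of partitions of $n$ into distinct even parts, with $p_{de}(0)=1$ and $p_{de}(n)=0$ for $n<0$. *)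

theory Defs
  imports Main "HOL-Library.Multiset"
begin

definition partitions :: "nat \<Rightarrow> nat multiset set" where
  "partitions n = {M. (\<forall>x\<in>#M. 0 < x) \<and> sum_mset M = n}"

definition spart :: "nat multiset \<Rightarrow> nat" where
  "spart M = Min (set_mset M)"

definition Spt_do :: "nat \<Rightarrow> nat \<Rightarrow> nat multiset set" where
  "Spt_do j n = {M \<in> partitions n. M \<noteq> {#} \<and> count M (spart M) = j \<and>
      (\<forall>x\<in>#M. spart M < x \<longrightarrow> count M x = 1 \<and> odd x \<noteq> odd (spart M))}"

definition nlarge :: "nat multiset \<Rightarrow> nat" where
  "nlarge M = size (filter_mset (\<lambda>x. spart M < x) M)"

definition B0 :: "nat \<Rightarrow> int \<Rightarrow> nat" where
  "B0 j n = (if n \<le> 0 then 0 else card {M \<in> Spt_do j (nat n). even (nlarge M)})"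

definition B1 :: "nat \<Rightarrow> int \<Rightarrow> nat" where
  "B1 j n = (if n \<le> 0 then 0 else card {M \<in> Spt_do j (nat n). odd (nlarge M)})"

text \<open>Partitions into distinct even parts; p_de(0) = 1 (empty partition), 0 for n < 0.\<close>
definition pde :: "int \<Rightarrow> nat" where
  "pde n = (if n < 0 then 0 else
     card {M \<in> partitions (nat n). \<forall>x\<in>#M. even x \<and> count M x = 1})"

end

theory Submission imports Defs begin

definition G :: "nat \<Rightarrow> nat \<Rightarrow> nat \<Rightarrow> (nat \<Rightarrow> bool) \<Rightarrow> (nat \<times> nat set) set" where
"G N j c Q = {(s,D). 0<s \<and> finite D \<and> (\<forall>x\<in>D. s<x \<and> odd x \<noteq> odd s) \<and> j*s + \<Sum>D + c = N \<and> Q (card D)}"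

definition rep :: "nat \<Rightarrow> nat \<times> nat set \<Rightarrow> nat multiset" where
"rep j p = replicate_mset j (fst p) + mset_set (snd p)"

lemma sum_mset_mset_set: "finite D \<Longrightarrow> sum_mset (mset_set D) = \<Sum>D"
  by (induction D rule: finite_induct) auto

lemma rep_props:
  assumes j: "1 \<le> j" and s: "0 < s" and D: "finite D" "\<forall>x\<in>D. s < x"
  defines "M \<equiv> replicate_mset j s + mset_set D"
  shows "set_mset M = insert s D" "spart M = s" "count M s = j"
    "\<And>x. x \<in> D \<Longrightarrow> count M x = 1" "sum_mset M = j*s + \<Sum>D"
    "nlarge M = card D" "set_mset M - {s} = D"
proof -
  have sD: "s \<notin> D" using D by auto
  show 1: "set_mset M = insert s D" using j D unfolding M_def by auto
  show 2: "spart M = s" unfolding spart_def 1 using D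
    by (intro Min_eqI) auto
  show "count M s = j" using sD D unfolding M_def by (simp add: count_mset_set)
  show "\<And>x. x \<in> D \<Longrightarrow> count M x = 1" using D unfolding M_def by (auto simp: count_mset_set)
  show "sum_mset M = j*s + \<Sum>D" unfolding M_def using D by (simp add: sum_mset_mset_set)
  have "filter_mset (\<lambda>x. s < x) M = mset_set D"
  proof -
    have "{x\<in>D. s<x} = D" using D by auto
    then show ?thesis unfolding M_def using D sD by (intro multiset_eqI) (auto simp: count_mset_set)
  qed
  then show "nlarge M = card D" unfolding nlarge_def 2 by simp
  show "set_mset M - {s} = D" using 1 sD by auto
qed

lemma Spt_decomp:
  assumes "M \<in> Spt_do j n"
  shows "0 < spart M" "finite (set_mset M - {spart M})"
    "\<forall>x\<in>set_mset M - {spart M}. spart M < x \<and> odd x \<noteq> odd (spart M)"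
    "M = replicate_mset j (spart M) + mset_set (set_mset M - {spart M})"
proof -
  obtain s where s: "s = spart M" by simp
  obtain D where D: "D = set_mset M - {s}" by simp
  have ne: "M \<noteq> {#}" and cs: "count M s = j" and pos: "\<forall>x\<in>#M. 0 < x"
    and lg: "\<forall>x\<in>#M. s < x \<longrightarrow> count M x = 1 \<and> odd x \<noteq> odd s"
    using assms unfolding Spt_do_def partitions_def s by auto
  have sin: "s \<in># M" unfolding s spart_def using ne by (intro Min_in) auto
  have smin: "\<And>x. x \<in># M \<Longrightarrow> s \<le> x" unfolding s spart_def by (intro Min_le) auto
  have "0 < s" using sin pos by auto
  moreover have "finite D" unfolding D by auto
  moreover have xD: "\<And>x. x \<in> D \<Longrightarrow> s < x \<and> x \<in># M"
  proof -
    fix x assume "x \<in> D"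
    then have "x \<in># M" "x \<noteq> s" unfolding D by auto
    then show "s < x \<and> x \<in># M" using smin[of x] by simp
  qed
  moreover have "\<forall>x\<in>D. s < x \<and> odd x \<noteq> odd s" using xD lg by blast
  moreover have "M = replicate_mset j s + mset_set D"
  proof (rule multiset_eqI)
    fix x
    show "count M x = count (replicate_mset j s + mset_set D) x"
    proof (cases "x = s")
      case True
      have "s \<notin> D" unfolding D by simp
      then show ?thesis using cs True by simp
    next
      case False
      show ?thesis
      proof (cases "x \<in># M")
        case True
        then have xd: "x \<in> D" using False unfolding D by simp
        then have "count M x = 1" using xD lg by blast
        then show ?thesis using xd False \<open>finite D\<close> by simp
      next
        case F2: False
        then have "x \<notin> D" unfolding D by simp
        then show ?thesis using F2 False by (simp add: count_eq_zero_iff)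
      qed
    qed
  qed
  ultimately show "0 < spart M" "finite (set_mset M - {spart M})"
    "\<forall>x\<in>set_mset M - {spart M}. spart M < x \<and> odd x \<noteq> odd (spart M)"
    "M = replicate_mset j (spart M) + mset_set (set_mset M - {spart M})"
    unfolding s[symmetric] D[symmetric] by auto
qed

lemma rep0:
  assumes j: "1 \<le> j"
  shows "card {M \<in> Spt_do j n. Q (nlarge M)} = card (G n j 0 Q)"
proof -
  let ?f' = "\<lambda>M. (spart M, set_mset M - {spart M})"
  have "bij_betw (rep j) (G n j 0 Q) {M \<in> Spt_do j n. Q (nlarge M)}"
  proof (rule bij_betw_byWitness[where f' = ?f'])
    show "\<forall>a\<in>G n j 0 Q. ?f' (rep j a) = a"
      using rep_props[OF j] unfolding G_def rep_def by auto
    show "\<forall>a'\<in>{M \<in> Spt_do j n. Q (nlarge M)}. rep j (?f' a') = a'"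
      using Spt_decomp(4) unfolding rep_def by auto
    show "rep j ` G n j 0 Q \<subseteq> {M \<in> Spt_do j n. Q (nlarge M)}"
    proof
      fix M assume "M \<in> rep j ` G n j 0 Q"
      then obtain s D where sD: "(s,D) \<in> G n j 0 Q" and M: "M = replicate_mset j s + mset_set D"
        unfolding rep_def by auto
      have p: "0 < s" "finite D" "\<forall>x\<in>D. s < x \<and> odd x \<noteq> odd s" "j*s + \<Sum>D = n" "Q (card D)"
        using sD unfolding G_def by auto
      have lt: "\<forall>x\<in>D. s < x" using p by auto
      note R = rep_props[OF j p(1) p(2) lt, folded M]
      show "M \<in> {M \<in> Spt_do j n. Q (nlarge M)}"
        unfolding Spt_do_def partitions_def mem_Collect_eq
        using R p j by (auto simp: M)
    qed
    show "?f' ` {M \<in> Spt_do j n. Q (nlarge M)} \<subseteq> G n j 0 Q"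
    proof
      fix p assume "p \<in> ?f' ` {M \<in> Spt_do j n. Q (nlarge M)}"
      then obtain M where M: "M \<in> Spt_do j n" "Q (nlarge M)" and p: "p = ?f' M" by auto
      note d = Spt_decomp[OF M(1)]
      have lt: "\<forall>x\<in>set_mset M - {spart M}. spart M < x" using d(3) by auto
      note R = rep_props[OF j d(1) d(2) lt, folded d(4)]
      have "sum_mset M = n" using M(1) unfolding Spt_do_def partitions_def by auto
      then show "p \<in> G n j 0 Q" unfolding G_def p using R d M(2) by auto
    qed
  qed
  then show ?thesis by (simp add: bij_betw_same_card)
qed


lemma G_empty:
  assumes "1 \<le> j" "N \<le> c" shows "G N j c Q = {}"
proof -
  { fix s D assume "(s,D) \<in> G N j c Q"
    then have "0 < s" "j*s + \<Sum>D + c = N" unfolding G_def by auto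
    moreover have "1 \<le> j * s" using assms(1) \<open>0 < s\<close> by simp
    ultimately have False using assms(2) by linarith }
  then show ?thesis by auto
qed

lemma G_shift:
  assumes "c \<le> N" shows "G N j c Q = G (N - c) j 0 Q"
  using assms unfolding G_def by auto

lemma Bform:
  assumes "1 \<le> j"
  shows "(if int N - int c \<le> 0 then 0 else card {M \<in> Spt_do j (nat (int N - int c)). Q (nlarge M)})
     = card (G N j c Q)"
proof (cases "N \<le> c")
  case True
  then show ?thesis using G_empty[OF assms True] by simp
next
  case False
  then have "nat (int N - int c) = N - c" by simp
  then show ?thesis using False rep0[OF assms] G_shift[of c N] by simp
qed

lemma B0_form: "1 \<le> j \<Longrightarrow> B0 j (int N - int c) = card (G N j c even)"
  unfolding B0_def using Bform[of j N c even] by simp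

lemma B1_form: "1 \<le> j \<Longrightarrow> B1 j (int N - int c) = card (G N j c odd)"
  unfolding B1_def using Bform[of j N c odd] by simp

definition H :: "nat \<Rightarrow> nat \<Rightarrow> nat set set" where
"H N c = {D. finite D \<and> (\<forall>x\<in>D. even x \<and> 0 < x) \<and> \<Sum>D + c = N}"

lemma pde0: "card {M \<in> partitions n. \<forall>x\<in>#M. even x \<and> count M x = 1} = card (H n 0)"
proof -
  have "bij_betw mset_set (H n 0) {M \<in> partitions n. \<forall>x\<in>#M. even x \<and> count M x = 1}"
  proof (rule bij_betw_byWitness[where f' = set_mset])
    show "\<forall>a\<in>H n 0. set_mset (mset_set a) = a" unfolding H_def by auto
    show "\<forall>a'\<in>{M \<in> partitions n. \<forall>x\<in>#M. even x \<and> count M x = 1}. mset_set (set_mset a') = a'"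
    proof
      fix M assume M: "M \<in> {M \<in> partitions n. \<forall>x\<in>#M. even x \<and> count M x = 1}"
      show "mset_set (set_mset M) = M"
      proof (rule multiset_eqI)
        fix x show "count (mset_set (set_mset M)) x = count M x"
          using M by (cases "x \<in># M") (auto simp: count_eq_zero_iff)
      qed
    qed
    show "mset_set ` H n 0 \<subseteq> {M \<in> partitions n. \<forall>x\<in>#M. even x \<and> count M x = 1}"
      unfolding H_def partitions_def by (auto simp: sum_mset_mset_set)
    show "set_mset ` {M \<in> partitions n. \<forall>x\<in>#M. even x \<and> count M x = 1} \<subseteq> H n 0"
    proof
      fix D assume "D \<in> set_mset ` {M \<in> partitions n. \<forall>x\<in>#M. even x \<and> count M x = 1}"
      then obtain M where M: "M \<in> partitions n" "\<forall>x\<in>#M. even x \<and> count M x = 1" and D: "D = set_mset M"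
        by auto
      have "mset_set (set_mset M) = M"
      proof (rule multiset_eqI)
        fix x show "count (mset_set (set_mset M)) x = count M x"
          using M by (cases "x \<in># M") (auto simp: count_eq_zero_iff)
      qed
      then have "\<Sum>D = sum_mset M" unfolding D by (metis finite_set_mset sum_mset_mset_set)
      then show "D \<in> H n 0" using M unfolding H_def partitions_def D by auto
    qed
  qed
  then show ?thesis by (simp add: bij_betw_same_card)
qed

lemma pde_form: "pde (int N - int c) = card (H N c)"
proof (cases "N < c")
  case True
  have "H N c = {}" using True unfolding H_def by auto
  then show ?thesis using True unfolding pde_def by simp
next
  case False
  then have "nat (int N - int c) = N - c" by simp
  moreover have "H N c = H (N - c) 0" using False unfolding H_def by auto
  ultimately show ?thesis using False pde0 unfolding pde_def by simp
qed

lemma Gpar: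
  assumes "(s,D) \<in> G N j c Q" shows "even (\<Sum>D) = (odd s \<or> even (card D))"
proof -
  have D: "finite D" "\<forall>x\<in>D. odd x \<noteq> odd s" using assms unfolding G_def by auto
  have e: "even (\<Sum>D) = even (card {x\<in>D. odd x})" using even_sum_iff[OF D(1), of "\<lambda>x. x"] by simp
  show ?thesis
  proof (cases "odd s")
    case True
    then have "{x\<in>D. odd x} = {}" using D by auto
    then have "card {x\<in>D. odd x} = 0" by (simp only: card.empty)
    then show ?thesis using e True by simp
  next
    case False
    then have "{x\<in>D. odd x} = D" using D by auto
    then show ?thesis using e False by simp
  qed
qed

lemma H_even: assumes "D \<in> H N c" shows "even (\<Sum>D)"
proof -
  have "finite D" "\<forall>x\<in>D. even x" using assms unfolding H_def by auto
  then show ?thesis by (induction D rule: finite_induct) auto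
qed


lemma card_split: "finite A \<Longrightarrow> card A = card {x\<in>A. P x} + card {x\<in>A. \<not> P x}"
proof -
  assume f: "finite A"
  have "A = {x\<in>A. P x} \<union> {x\<in>A. \<not> P x}" by auto
  then have "card A = card ({x\<in>A. P x} \<union> {x\<in>A. \<not> P x})" by simp
  also have "\<dots> = card {x\<in>A. P x} + card {x\<in>A. \<not> P x}"
    using f by (intro card_Un_disjoint) auto
  finally show ?thesis .
qed

lemma G_finite: assumes "1 \<le> j" shows "finite (G N j c Q)"
proof (rule finite_subset)
  show "G N j c Q \<subseteq> {..N} \<times> Pow {..N}"
  proof
    fix p assume "p \<in> G N j c Q"
    then obtain s D where p: "p = (s,D)" "finite D" "j*s + \<Sum>D + c = N"
      unfolding G_def by auto
    have "s \<le> j * s" using assms by simp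
    then have "s \<le> N" using p by linarith
    moreover have "\<forall>x\<in>D. x \<le> N"
    proof
      fix x assume "x \<in> D"
      then have "x \<le> \<Sum>D" using p(2) by (intro member_le_sum) auto
      then show "x \<le> N" using p by linarith
    qed
    ultimately show "p \<in> {..N} \<times> Pow {..N}" using p by auto
  qed
  show "finite ({..N} \<times> Pow {..N})" by simp
qed

lemma H_finite: "finite (H N c)"
proof (rule finite_subset)
  show "H N c \<subseteq> Pow {..N}"
  proof
    fix D assume "D \<in> H N c"
    then have p: "finite D" "\<Sum>D + c = N" unfolding H_def by auto
    have "\<forall>x\<in>D. x \<le> N"
    proof
      fix x assume "x \<in> D"
      then have "x \<le> \<Sum>D" using p(1) by (intro member_le_sum) auto
      then show "x \<le> N" using p by linarith
    qed
    then show "D \<in> Pow {..N}" by auto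
  qed
qed simp

lemma core_even:
  assumes "even k" "N = 2*t"
  shows "G N k 1 even = {}" "G N (k+1) 0 odd = {}" "G N k (2*k+1) even = {}" "H N (k+1) = {}"
proof -
  { fix s D c assume m: "(s,D) \<in> G N k c even" "odd c"
    have e: "k*s + \<Sum>D + c = N" "even (card D)" using m unfolding G_def by auto
    have "even (\<Sum>D)" using Gpar[OF m(1)] e(2) by simp
    then have "odd (k*s + \<Sum>D + c)" using assms(1) m(2) by simp
    moreover have "even (k*s + \<Sum>D + c)" using e(1) assms(2) by simp
    ultimately have False by simp }
  then show "G N k 1 even = {}" "G N k (2*k+1) even = {}" by fastforce+
  { fix s D assume m: "(s,D) \<in> G N (k+1) 0 odd"
    have e: "(k+1)*s + \<Sum>D = N" "odd (card D)" using m unfolding G_def by auto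
    have "even (\<Sum>D) = odd s" using Gpar[OF m(1)] e(2) by simp
    then have "odd ((k+1)*s + \<Sum>D)" using assms(1) by auto
    moreover have "even ((k+1)*s + \<Sum>D)" using e(1) assms(2) by simp
    ultimately have False by simp }
  then show "G N (k+1) 0 odd = {}" by fastforce
  { fix D assume m: "D \<in> H N (k+1)"
    have "even (\<Sum>D)" using H_even[OF m] .
    then have "odd (\<Sum>D + (k+1))" using assms(1) by simp
    moreover have "even (\<Sum>D + (k+1))" using m assms(2) unfolding H_def by simp
    ultimately have False by simp }
  then show "H N (k+1) = {}" by blast
qed


lemma G_mem [simp]: "(s,D) \<in> G N j c Q \<longleftrightarrow> 0<s \<and> finite D \<and> (\<forall>x\<in>D. s<x \<and> odd x \<noteq> odd s) \<and> j*s + \<Sum>D + c = N \<and> Q (card D)"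
  unfolding G_def by simp

lemma core_odd:
  assumes "odd k" "N = 2*t"
  shows "card (G N k 1 even) + card (G N (k+1) 0 odd) = card (G N k (2*k+1) even) + card (H N (k+1))"
proof -
  have k1: "1 \<le> k" using assms(1) by (cases k) auto
  define A where "A = G N k 1 even"
  define B where "B = G N (k+1) 0 odd"
  define C where "C = G N k (2*k+1) even"
  define A1 where "A1 = {p\<in>A. fst p = 1}"
  define A3 where "A3 = {p\<in>A. \<not> fst p = 1}"
  define B1 where "B1 = {p\<in>B. fst p = 1}"
  define B3 where "B3 = {p\<in>B. \<not> fst p = 1}"
  define He where "He = {D \<in> H N (k+1). even (card D)}"
  define Ho where "Ho = {D \<in> H N (k+1). \<not> even (card D)}"
  have sA: "odd s" if m: "(s,D) \<in> A" for s D
  proof (rule ccontr)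
    assume "\<not> odd s"
    have e: "k*s + \<Sum>D + 1 = N" "even (card D)" using m unfolding A_def G_mem by auto
    have "even (\<Sum>D)" using Gpar[OF m[unfolded A_def]] e(2) by simp
    then have "odd (k*s + \<Sum>D + 1)" using \<open>\<not> odd s\<close> by simp
    moreover have "even (k*s + \<Sum>D + 1)" using e(1) assms(2) by simp
    ultimately show False by simp
  qed
  have sB: "odd s" if m: "(s,D) \<in> B" for s D
  proof (rule ccontr)
    assume "\<not> odd s"
    have e: "(k+1)*s + \<Sum>D + 0 = N" "odd (card D)" using m unfolding B_def G_mem by auto
    have "odd (\<Sum>D)" using Gpar[OF m[unfolded B_def]] e(2) \<open>\<not> odd s\<close> by simp
    then have "odd ((k+1)*s + \<Sum>D + 0)" using \<open>\<not> odd s\<close> by simp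
    moreover have "even ((k+1)*s + \<Sum>D + 0)" using e(1) assms(2) by simp
    ultimately show False by simp
  qed
  have sC: "odd s" if m: "(s,D) \<in> C" for s D
  proof (rule ccontr)
    assume "\<not> odd s"
    have e: "k*s + \<Sum>D + (2*k+1) = N" "even (card D)" using m unfolding C_def G_mem by auto
    have "even (\<Sum>D)" using Gpar[OF m[unfolded C_def]] e(2) by simp
    then have "odd (k*s + \<Sum>D + (2*k+1))" using \<open>\<not> odd s\<close> by simp
    moreover have "even (k*s + \<Sum>D + (2*k+1))" using e(1) assms(2) by simp
    ultimately show False by simp
  qed
  have fA: "finite A" "finite B" "finite C" unfolding A_def B_def C_def using G_finite k1 by auto
  have cA: "card A = card A1 + card A3" unfolding A1_def A3_def using card_split[OF fA(1)] .
  have cB: "card B = card B1 + card B3" unfolding B1_def B3_def using card_split[OF fA(2)] .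
  have cH: "card (H N (k+1)) = card He + card Ho" unfolding He_def Ho_def using card_split[OF H_finite] .
  have c1: "card A1 = card He"
  proof -
    have "inj_on snd A1" unfolding A1_def inj_on_def by auto
    moreover have "snd ` A1 = He"
    proof
      show "snd ` A1 \<subseteq> He"
      proof
        fix D assume "D \<in> snd ` A1"
        then obtain s where m: "(s,D) \<in> A" "s = 1" unfolding A1_def by auto
        then show "D \<in> He" unfolding He_def H_def A_def G_mem by auto
      qed
      show "He \<subseteq> snd ` A1"
      proof
        fix D assume m: "D \<in> He"
        have "\<forall>x\<in>D. 1 < x \<and> even x"
        proof
          fix x assume "x \<in> D"
          then have "even x" "0 < x" using m unfolding He_def H_def by auto
          then show "1 < x \<and> even x" by presburger
        qed
        then have "(1,D) \<in> A1" using m unfolding He_def H_def A1_def A_def by (auto simp: G_mem)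
        then show "D \<in> snd ` A1" by force
      qed
    qed
    ultimately show ?thesis using card_image by fastforce
  qed
  have c2: "card B1 = card Ho"
  proof -
    have "inj_on snd B1" unfolding B1_def inj_on_def by auto
    moreover have "snd ` B1 = Ho"
    proof
      show "snd ` B1 \<subseteq> Ho"
      proof
        fix D assume "D \<in> snd ` B1"
        then obtain s where m: "(s,D) \<in> B" "s = 1" unfolding B1_def by auto
        then show "D \<in> Ho" unfolding Ho_def H_def B_def G_mem by auto
      qed
      show "Ho \<subseteq> snd ` B1"
      proof
        fix D assume m: "D \<in> Ho"
        have "\<forall>x\<in>D. 1 < x \<and> even x"
        proof
          fix x assume "x \<in> D"
          then have "even x" "0 < x" using m unfolding Ho_def H_def by auto
          then show "1 < x \<and> even x" by presburger
        qed
        then have "(1,D) \<in> B1" using m unfolding Ho_def H_def B1_def B_def by (auto simp: G_mem)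
        then show "D \<in> snd ` B1" by force
      qed
    qed
    ultimately show ?thesis using card_image by fastforce
  qed
  define f where "f = (\<lambda>(s::nat,D::nat set). (s+2, D))"
  define g where "g = (\<lambda>(s::nat,D::nat set). (s, insert (s-1) D))"
  have injf: "inj_on f C" unfolding f_def inj_on_def by auto
  have injg: "inj_on g B3"
  proof (rule inj_onI)
    fix p q assume p: "p \<in> B3" and q: "q \<in> B3" and e: "g p = g q"
    obtain s D where ps: "p = (s,D)" by fastforce
    obtain s' D' where qs: "q = (s',D')" by fastforce
    have ss: "s = s'" and ins: "insert (s-1) D = insert (s-1) D'" using e unfolding ps qs g_def by auto
    have "s - 1 \<notin> D" using p unfolding ps B3_def B_def by fastforce
    moreover have "s - 1 \<notin> D'" using q unfolding qs ss B3_def B_def by fastforce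
    ultimately have "D = D'" using ins by (metis Diff_insert_absorb)
    then show "p = q" using ps qs ss by simp
  qed
  have disj: "A3 \<inter> g ` B3 = {}"
  proof (rule ccontr)
    assume "A3 \<inter> g ` B3 \<noteq> {}"
    then obtain s D where m1: "(s, insert (s-1) D) \<in> A3" unfolding g_def by auto
    then have "s < s - 1" unfolding A3_def A_def by auto
    then show False by simp
  qed
  have img: "f ` C = A3 \<union> g ` B3"
  proof
    show "f ` C \<subseteq> A3 \<union> g ` B3"
    proof
      fix p assume "p \<in> f ` C"
      then obtain s D where m: "(s,D) \<in> C" and p: "p = (s+2, D)" unfolding f_def by auto
      have so: "odd s" using sC[OF m] .
      have e: "0 < s" "finite D" "\<forall>x\<in>D. s<x \<and> odd x \<noteq> odd s" "k*s + \<Sum>D + (2*k+1) = N" "even (card D)"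
        using m unfolding C_def G_mem by auto
      have ev: "\<forall>x\<in>D. s < x \<and> even x" using e(3) so by auto
      show "p \<in> A3 \<union> g ` B3"
      proof (cases "s + 1 \<in> D")
        case True
        define D0 where "D0 = D - {s+1}"
        have DD: "D = insert (s+1) D0" "s+1 \<notin> D0" "finite D0" using True e(2) unfolding D0_def by auto
        have gt: "\<forall>x\<in>D0. s+2 < x \<and> odd x \<noteq> odd (s+2)"
        proof
          fix x assume x: "x \<in> D0"
          then have "s < x" "even x" "x \<noteq> s+1" using ev DD by auto
          moreover have "x \<noteq> s + 2" using so \<open>even x\<close> by auto
          ultimately show "s+2 < x \<and> odd x \<noteq> odd (s+2)" using so by auto
        qed
        have sum: "\<Sum>D = (s+1) + \<Sum>D0" using DD by simp
        have cd: "card D = Suc (card D0)" using DD by simp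
        have "(k+1)*(s+2) + \<Sum>D0 + 0 = N" using e(4) sum by (simp add: algebra_simps)
        then have "(s+2, D0) \<in> B3" unfolding B3_def B_def G_mem using gt DD(3) cd e(5) by auto
        moreover have "g (s+2, D0) = p" unfolding g_def p using DD by simp
        ultimately show ?thesis by blast
      next
        case False
        have gt: "\<forall>x\<in>D. s+2 < x \<and> odd x \<noteq> odd (s+2)"
        proof
          fix x assume x: "x \<in> D"
          then have "s < x" "even x" "x \<noteq> s+1" using ev False by auto
          moreover have "x \<noteq> s + 2" using so \<open>even x\<close> by auto
          ultimately show "s+2 < x \<and> odd x \<noteq> odd (s+2)" using so by auto
        qed
        have "k*(s+2) + \<Sum>D + 1 = N" using e(4) by (simp add: algebra_simps)
        then have "(s+2, D) \<in> A3" unfolding A3_def A_def G_mem using gt e by auto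
        then show ?thesis using p by blast
      qed
    qed
    show "A3 \<union> g ` B3 \<subseteq> f ` C"
    proof
      fix p assume "p \<in> A3 \<union> g ` B3"
      then show "p \<in> f ` C"
      proof
        assume pA: "p \<in> A3"
        then obtain s D where ps: "p = (s,D)" and m: "(s,D) \<in> A" and s1: "s \<noteq> 1" unfolding A3_def by (cases p) auto
        have so: "odd s" using sA[OF m] .
        have e: "0 < s" "finite D" "\<forall>x\<in>D. s<x \<and> odd x \<noteq> odd s" "k*s + \<Sum>D + 1 = N" "even (card D)"
          using m unfolding A_def G_mem by auto
        define r where "r = s - 2"
        have r: "s = r + 2" using so s1 e(1) unfolding r_def by presburger
        have ro: "odd r" "0 < r" using so r by presburger+
        have "\<forall>x\<in>D. r<x \<and> odd x \<noteq> odd r" using e(3) r by auto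
        moreover have "k*r + \<Sum>D + (2*k+1) = N" using e(4) r by (simp add: algebra_simps)
        ultimately have "(r,D) \<in> C" unfolding C_def G_mem using e ro by auto
        moreover have "f (r,D) = p" unfolding f_def ps r by simp
        ultimately show ?thesis by blast
      next
        assume "p \<in> g ` B3"
        then obtain s D0 where ps: "p = (s, insert (s-1) D0)" and m: "(s,D0) \<in> B" and s1: "s \<noteq> 1"
          unfolding g_def B3_def by auto
        have so: "odd s" using sB[OF m] .
        have e: "0 < s" "finite D0" "\<forall>x\<in>D0. s<x \<and> odd x \<noteq> odd s" "(k+1)*s + \<Sum>D0 + 0 = N" "odd (card D0)"
          using m unfolding B_def G_mem by auto
        define r where "r = s - 2"
        have r: "s = r + 2" using so s1 e(1) unfolding r_def by presburger
        have ro: "odd r" "0 < r" using so r by presburger+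
        have nin: "r + 1 \<notin> D0" using e(3) r by fastforce
        define D where "D = insert (r+1) D0"
        have "\<forall>x\<in>D. r<x \<and> odd x \<noteq> odd r" using e(3) r ro unfolding D_def by auto
        moreover have "\<Sum>D = (r+1) + \<Sum>D0" unfolding D_def using nin e(2) by simp
        moreover have "card D = Suc (card D0)" unfolding D_def using nin e(2) by simp
        ultimately have "(r,D) \<in> C" unfolding C_def G_mem using e ro r D_def by (auto simp: algebra_simps)
        moreover have "f (r,D) = p" unfolding f_def ps r D_def by simp
        ultimately show ?thesis by blast
      qed
    qed
  qed
  have fin3: "finite A3" "finite (g ` B3)" unfolding A3_def B3_def using fA by auto
  have "card C = card (f ` C)" using card_image[OF injf] by simp
  also have "\<dots> = card A3 + card (g ` B3)" unfolding img using card_Un_disjoint[OF fin3 disj] .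
  also have "\<dots> = card A3 + card B3" using card_image[OF injg] by simp
  finally have cC: "card C = card A3 + card B3" .
  show ?thesis using cA cB cH c1 c2 cC unfolding A_def[symmetric] B_def[symmetric] C_def[symmetric] by simp
qed


theorem lemma3:
  fixes k t :: nat
  assumes "1 \<le> k" and "1 \<le> t"
  shows "B0 k (2 * int t - 1) + B1 (k + 1) (2 * int t)
       = B0 k (2 * int t - 2 * int k - 1) + pde (2 * int t - int k - 1)"
proof -
  have e1: "2 * int t - 1 = int (2*t) - int 1" by simp
  have e2: "2 * int t = int (2*t) - int 0" by simp
  have e3: "2 * int t - 2 * int k - 1 = int (2*t) - int (2*k+1)" by simp
  have e4: "2 * int t - int k - 1 = int (2*t) - int (k+1)" by simp
  have k1: "1 \<le> k + 1" by simp
  show ?thesis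
    unfolding e1 e3 e4
    apply (subst e2)
    unfolding B0_form[OF assms(1)] B1_form[OF k1] pde_form
  proof (cases "even k")
    case True
    show "card (G (2 * t) k 1 even) + card (G (2 * t) (k + 1) 0 odd) =
      card (G (2 * t) k (2 * k + 1) even) + card (H (2 * t) (k + 1))"
      using core_even[OF True refl] by simp
  next
    case False
    show "card (G (2 * t) k 1 even) + card (G (2 * t) (k + 1) 0 odd) =
      card (G (2 * t) k (2 * k + 1) even) + card (H (2 * t) (k + 1))"
      using core_odd[OF False refl] by simp
  qed
qed

end
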